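(* Let $w_1,\dots,w_n\in\mathbb R_{\ge0}$ be $n$ weights, and let $\mathcal M$ be a loopless matroid whose ground set has size $k\le n$. Suppose we first choose a uniformly random subset of $k$ of the weights $w_1,\dots,w_n$ and then assign these $k$ weights uniformly at random (by a uniformly random bijection) to the elements of $\mathcal M$. Then $\mathbb E[w(\mathrm{OPT}(\mathcal M))]\le \frac{3e}{e-1}\,F(\rho_{\mathcal M})$.
   Context: For a matroid $\mathcal M=(N,\mathcal I)$ with rank function $r$, let $\mathrm{rank}(\mathcal M)=r(N)$. For $S\subseteq N$ and $\lambda\ge0$, $D_{\mathcal M}(S,\lambda)$ is the unique inclusion-wise maximal set among all maximizers of $|U|-\lambda r(U)$ over $U\subseteq S$. The rank-density curve $\rho_{\mathcal M}:\mathbb R_{>0}\to\mathbb R_{\ge0}$ is $\rho_{\mathcal M}(t)=\max\{\lambda\ge0: r(D_{\mathcal M}(N,\lambda))\ge t\}$ for $0<t\le\mathrm{rank}(\mathcal M)$ and $\rho_{\mathcal M}(t)=0$ for $t>\mathrm{rank}(\mathcal M)$. For $a\in[0,n]$, $\eta(a)$ is the expected value of $\max_{i\in R}w_i$ where $R$ is a uniformly random subset of $\{1,\dots,n\}$ of size $\lfloor a\rfloor$, with the convention $\eta(a)=0$ for $a\in[0,1)$. For a function $\rho:\mathbb R_{>0}\to[0,n]$, $F(\rho)=\int_0^\infty\eta(\rho(t))\,dt$. $\mathrm{OPT}(\mathcal M)$ denotes a maximum-weight independent set and $w(I)=\sum_{e\in I}w(e)$. *)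

theory Defs
  imports "HOL-Analysis.Analysis" "HOL-Library.FuncSet"
begin

definition matroid :: "'a set \<Rightarrow> ('a set \<Rightarrow> bool) \<Rightarrow> bool" where
  "matroid N indep \<longleftrightarrow> finite N \<and> (\<forall>I. indep I \<longrightarrow> I \<subseteq> N) \<and> indep {} \<and>
     (\<forall>I J. indep J \<and> I \<subseteq> J \<longrightarrow> indep I) \<and>
     (\<forall>I J. indep I \<and> indep J \<and> card I < card J \<longrightarrow> (\<exists>e\<in>J - I. indep (insert e I)))"

definition loopless :: "'a set \<Rightarrow> ('a set \<Rightarrow> bool) \<Rightarrow> bool" where
  "loopless N indep \<longleftrightarrow> (\<forall>e\<in>N. indep {e})"

definition mrank :: "('a set \<Rightarrow> bool) \<Rightarrow> 'a set \<Rightarrow> nat" where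
  "mrank indep U = Max (card ` {I. I \<subseteq> U \<and> indep I})"

definition dens_maximizers :: "('a set \<Rightarrow> bool) \<Rightarrow> 'a set \<Rightarrow> real \<Rightarrow> 'a set set" where
  "dens_maximizers indep S lam =
     {U. U \<subseteq> S \<and> (\<forall>V. V \<subseteq> S \<longrightarrow>
        real (card V) - lam * real (mrank indep V) \<le> real (card U) - lam * real (mrank indep U))}"

definition densest :: "('a set \<Rightarrow> bool) \<Rightarrow> 'a set \<Rightarrow> real \<Rightarrow> 'a set" where
  "densest indep S lam = (THE D. D \<in> dens_maximizers indep S lam \<and>
       (\<forall>U\<in>dens_maximizers indep S lam. D \<subseteq> U \<longrightarrow> U = D))"

text \<open>Rank-density curve (the maximum is written as a supremum; it is attained).\<close>
definition rank_density :: "'a set \<Rightarrow> ('a set \<Rightarrow> bool) \<Rightarrow> real \<Rightarrow> real" where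
  "rank_density N indep t =
     (if 0 < t \<and> t \<le> real (mrank indep N)
      then Sup {lam. lam \<ge> 0 \<and> real (mrank indep (densest indep N lam)) \<ge> t}
      else 0)"

definition eta :: "(nat \<Rightarrow> real) \<Rightarrow> nat \<Rightarrow> real \<Rightarrow> real" where
  "eta w n a = (if a < 1 then 0 else
     (\<Sum>R\<in>{R. R \<subseteq> {1..n} \<and> card R = nat \<lfloor>a\<rfloor>}. Max (w ` R)) / real (n choose nat \<lfloor>a\<rfloor>))"

definition F_funct :: "(nat \<Rightarrow> real) \<Rightarrow> nat \<Rightarrow> (real \<Rightarrow> real) \<Rightarrow> real" where
  "F_funct w n rho = integral {0<..} (\<lambda>t. eta w n (rho t))"

definition opt_weight :: "'a set \<Rightarrow> ('a set \<Rightarrow> bool) \<Rightarrow> ('a \<Rightarrow> real) \<Rightarrow> real" where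
  "opt_weight N indep c = Max ((\<lambda>I. \<Sum>e\<in>I. c e) ` {I. I \<subseteq> N \<and> indep I})"

definition expected_opt :: "'a set \<Rightarrow> ('a set \<Rightarrow> bool) \<Rightarrow> (nat \<Rightarrow> real) \<Rightarrow> nat \<Rightarrow> real" where
  "expected_opt N indep w n =
     (\<Sum>S\<in>{S. S \<subseteq> {1..n} \<and> card S = card N}.
        (\<Sum>f\<in>{f. bij_betw f N S \<and> f \<in> extensional N}. opt_weight N indep (\<lambda>e. w (f e)))
          / real (card {f. bij_betw f N S \<and> f \<in> extensional N}))
     / real (n choose card N)"

end

theory Submission
  imports Defs
begin


lemma indep_sub: "matroid N indep \<Longrightarrow> indep I \<Longrightarrow> I \<subseteq> N"
  unfolding matroid_def by blast

lemma indep_fin: "matroid N indep \<Longrightarrow> indep I \<Longrightarrow> finite I"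
  unfolding matroid_def by (meson finite_subset)

lemma indep_down: "matroid N indep \<Longrightarrow> indep J \<Longrightarrow> I \<subseteq> J \<Longrightarrow> indep I"
  unfolding matroid_def by blast

lemma indep_empty: "matroid N indep \<Longrightarrow> indep {}"
  unfolding matroid_def by blast

lemma indep_aug: "matroid N indep \<Longrightarrow> indep I \<Longrightarrow> indep J \<Longrightarrow> card I < card J \<Longrightarrow> \<exists>e\<in>J - I. indep (insert e I)"
  unfolding matroid_def by blast

lemma mrank_fin: assumes "matroid N indep" shows "finite {I. I \<subseteq> U \<and> indep I}"
proof -
  have "{I. I \<subseteq> U \<and> indep I} \<subseteq> Pow N" using indep_sub[OF assms] by blast
  moreover have "finite N" using assms unfolding matroid_def by blast
  ultimately show ?thesis by (meson finite_Pow_iff finite_subset)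
qed

lemma mrank_ge: assumes "matroid N indep" "I \<subseteq> U" "indep I" shows "card I \<le> mrank indep U"
  unfolding mrank_def using assms mrank_fin[OF assms(1)] by (intro Max_ge) auto

lemma mrank_obtain: assumes "matroid N indep" shows "\<exists>I. I \<subseteq> U \<and> indep I \<and> card I = mrank indep U"
proof -
  have ne: "card ` {I. I \<subseteq> U \<and> indep I} \<noteq> {}" using indep_empty[OF assms] by blast
  have "mrank indep U \<in> card ` {I. I \<subseteq> U \<and> indep I}"
    unfolding mrank_def using mrank_fin[OF assms] ne by (intro Max_in) auto
  then show ?thesis by auto
qed

lemma mrank_mono: assumes "matroid N indep" "A \<subseteq> B" shows "mrank indep A \<le> mrank indep B"
proof -
  obtain I where "I \<subseteq> A" "indep I" "card I = mrank indep A" using mrank_obtain[OF assms(1)] by blast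
  then show ?thesis using mrank_ge[OF assms(1), of I B] assms(2) by auto
qed

lemma mrank_un_le: assumes "matroid N indep" "finite B"
  shows "mrank indep (A \<union> B) \<le> mrank indep A + card B"
proof -
  obtain I where I: "I \<subseteq> A \<union> B" "indep I" "card I = mrank indep (A \<union> B)" using mrank_obtain[OF assms(1)] by blast
  have fI: "finite I" using indep_fin[OF assms(1) I(2)] .
  have "card I \<le> card (I \<inter> A) + card (I \<inter> B)"
  proof -
    have "I = (I \<inter> A) \<union> (I \<inter> B)" using I(1) by blast
    then have "card I = card ((I \<inter> A) \<union> (I \<inter> B))" by simp
    also have "\<dots> \<le> card (I \<inter> A) + card (I \<inter> B)" by (rule card_Un_le)
    finally show ?thesis .
  qed
  moreover have "card (I \<inter> A) \<le> mrank indep A"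
    using mrank_ge[OF assms(1), of "I \<inter> A" A] indep_down[OF assms(1) I(2)] by auto
  moreover have "card (I \<inter> B) \<le> card B" using assms(2) by (simp add: card_mono)
  ultimately show ?thesis using I(3) by linarith
qed

lemma mrank_le_card: assumes "matroid N indep" "finite U" shows "mrank indep U \<le> card U"
  using mrank_un_le[OF assms(1) assms(2), of "{}"] mrank_ge[OF assms(1), of "{}" "{}"]
proof -
  obtain I where "I \<subseteq> {}" "indep I" "card I = mrank indep {}" using mrank_obtain[OF assms(1)] by blast
  then have "mrank indep {} = 0" by auto
  then show ?thesis using mrank_un_le[OF assms(1) assms(2), of "{}"] by simp
qed

lemma mrank_empty: assumes "matroid N indep" shows "mrank indep {} = 0"
  using mrank_le_card[OF assms, of "{}"] by simp

lemma mrank_pos: assumes "matroid N indep" "loopless N indep" "e \<in> N" "e \<in> U"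
  shows "1 \<le> mrank indep U"
  using mrank_ge[OF assms(1), of "{e}" U] assms unfolding loopless_def by auto

lemma extend_aux: assumes "matroid N indep"
  shows "d = mrank indep U - card I \<Longrightarrow> indep I \<Longrightarrow> I \<subseteq> U \<Longrightarrow>
    \<exists>J. I \<subseteq> J \<and> J \<subseteq> U \<and> indep J \<and> card J = mrank indep U"
proof (induction d arbitrary: I)
  case 0
  then show ?case using mrank_ge[OF assms, of I U] by (intro exI[of _ I]) auto
next
  case (Suc d)
  obtain K where K: "K \<subseteq> U" "indep K" "card K = mrank indep U" using mrank_obtain[OF assms] by blast
  have "card I < card K" using Suc.prems K(3) by linarith
  then obtain e where e: "e \<in> K - I" "indep (insert e I)" using indep_aug[OF assms Suc.prems(2) K(2)] by blast
  have fI: "finite I" using indep_fin[OF assms Suc.prems(2)] .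
  have c: "card (insert e I) = Suc (card I)" using e(1) fI by simp
  have "d = mrank indep U - card (insert e I)" using c Suc.prems(1) by simp
  moreover have "insert e I \<subseteq> U" using e(1) K(1) Suc.prems(3) by blast
  ultimately obtain J where "insert e I \<subseteq> J \<and> J \<subseteq> U \<and> indep J \<and> card J = mrank indep U"
    using Suc.IH e(2) by blast
  then show ?case by blast
qed

lemma extend: assumes "matroid N indep" "indep I" "I \<subseteq> U"
  shows "\<exists>J. I \<subseteq> J \<and> J \<subseteq> U \<and> indep J \<and> card J = mrank indep U"
  using extend_aux[OF assms(1) refl assms(2,3)] .

lemma submod: assumes "matroid N indep"
  shows "mrank indep (A \<union> B) + mrank indep (A \<inter> B) \<le> mrank indep A + mrank indep B"
proof -
  obtain I where I: "I \<subseteq> A \<inter> B" "indep I" "card I = mrank indep (A \<inter> B)" using mrank_obtain[OF assms] by blast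
  obtain J where J: "I \<subseteq> J" "J \<subseteq> A \<union> B" "indep J" "card J = mrank indep (A \<union> B)"
    using extend[OF assms I(2), of "A \<union> B"] I(1) by blast
  have fJ: "finite J" using indep_fin[OF assms J(3)] .
  have "card (J \<inter> A) + card (J \<inter> B) = card ((J \<inter> A) \<union> (J \<inter> B)) + card ((J \<inter> A) \<inter> (J \<inter> B))"
    using fJ by (intro card_Un_Int) auto
  also have "(J \<inter> A) \<union> (J \<inter> B) = J" using J(2) by blast
  finally have eq: "card (J \<inter> A) + card (J \<inter> B) = card J + card (J \<inter> (A \<inter> B))" by (simp add: Int_ac)
  have "card I \<le> card (J \<inter> (A \<inter> B))" using I(1) J(1) fJ by (intro card_mono) auto
  moreover have "card (J \<inter> A) \<le> mrank indep A"
    using mrank_ge[OF assms, of "J \<inter> A" A] indep_down[OF assms J(3)] by auto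
  moreover have "card (J \<inter> B) \<le> mrank indep B"
    using mrank_ge[OF assms, of "J \<inter> B" B] indep_down[OF assms J(3)] by auto
  ultimately show ?thesis using eq I(3) J(4) by linarith
qed



definition fval :: "('a set \<Rightarrow> bool) \<Rightarrow> real \<Rightarrow> 'a set \<Rightarrow> real" where
  "fval indep lam U = real (card U) - lam * real (mrank indep U)"

lemma matroid_fin: "matroid N indep \<Longrightarrow> finite N" unfolding matroid_def by blast

lemma dm_iff: "U \<in> dens_maximizers indep S lam \<longleftrightarrow> U \<subseteq> S \<and> (\<forall>V. V \<subseteq> S \<longrightarrow> fval indep lam V \<le> fval indep lam U)"
  unfolding dens_maximizers_def fval_def by simp

lemma aux_lin: "(a::real) + b \<le> c + d \<Longrightarrow> d \<le> b \<Longrightarrow> a \<le> c" by linarith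

lemma supermod: assumes "matroid N indep" "0 \<le> lam" "U \<subseteq> N" "V \<subseteq> N"
  shows "fval indep lam U + fval indep lam V \<le> fval indep lam (U \<union> V) + fval indep lam (U \<inter> V)"
proof -
  have fin: "finite U" "finite V" using assms matroid_fin finite_subset by metis+
  have c: "card (U \<union> V) + card (U \<inter> V) = card U + card V" using card_Un_Int[OF fin] by simp
  have s: "real (mrank indep (U \<union> V)) + real (mrank indep (U \<inter> V)) \<le> real (mrank indep U) + real (mrank indep V)"
    using submod[OF assms(1), of U V] by linarith
  have "lam * (real (mrank indep (U \<union> V)) + real (mrank indep (U \<inter> V))) \<le> lam * (real (mrank indep U) + real (mrank indep V))"
    by (rule mult_left_mono[OF s assms(2)])
  then show ?thesis unfolding fval_def using c
    by (simp add: algebra_simps)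
qed

lemma dm_nonempty: assumes "matroid N indep" shows "\<exists>U. U \<in> dens_maximizers indep N lam"
proof -
  have fin: "finite (Pow N)" using matroid_fin[OF assms] by simp
  let ?m = "Max (fval indep lam ` Pow N)"
  have "?m \<in> fval indep lam ` Pow N" using fin by (intro Max_in) auto
  then obtain U where U: "U \<subseteq> N" "fval indep lam U = ?m" by auto
  have "\<forall>V. V \<subseteq> N \<longrightarrow> fval indep lam V \<le> fval indep lam U"
    using fin U(2) by (auto intro!: Max_ge)
  then show ?thesis unfolding dm_iff using U(1) by blast
qed

lemma dm_union: assumes "matroid N indep" "0 \<le> lam" "U \<in> dens_maximizers indep N lam" "V \<in> dens_maximizers indep N lam"
  shows "U \<union> V \<in> dens_maximizers indep N lam"
proof -
  have U: "U \<subseteq> N" "\<And>W. W \<subseteq> N \<Longrightarrow> fval indep lam W \<le> fval indep lam U" using assms(3) unfolding dm_iff by auto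
  have V: "V \<subseteq> N" "\<And>W. W \<subseteq> N \<Longrightarrow> fval indep lam W \<le> fval indep lam V" using assms(4) unfolding dm_iff by auto
  have "fval indep lam U + fval indep lam V \<le> fval indep lam (U \<union> V) + fval indep lam (U \<inter> V)"
    using supermod[OF assms(1,2) U(1) V(1)] .
  moreover have "fval indep lam (U \<inter> V) \<le> fval indep lam V" using V(2) V(1) by blast
  ultimately have "fval indep lam U \<le> fval indep lam (U \<union> V)" by (rule aux_lin)
  then have "\<forall>W. W \<subseteq> N \<longrightarrow> fval indep lam W \<le> fval indep lam (U \<union> V)"
  proof (intro allI impI)
    fix W assume "W \<subseteq> N"
    then have "fval indep lam W \<le> fval indep lam U" by (rule U(2))
    then show "fval indep lam W \<le> fval indep lam (U \<union> V)" using \<open>fval indep lam U \<le> fval indep lam (U \<union> V)\<close> by (rule order_trans)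
  qed
  then show ?thesis unfolding dm_iff using U(1) V(1) by blast
qed

lemma densest_props: assumes "matroid N indep" "0 \<le> lam"
  shows "densest indep N lam \<in> dens_maximizers indep N lam"
    "\<And>V. V \<in> dens_maximizers indep N lam \<Longrightarrow> V \<subseteq> densest indep N lam"
proof -
  let ?M = "dens_maximizers indep N lam"
  have finM: "finite ?M" using matroid_fin[OF assms(1)]
    by (rule finite_subset[rotated, OF finite_Pow_iff[THEN iffD2]]) (auto simp: dm_iff)
  have neM: "?M \<noteq> {}" using dm_nonempty[OF assms(1)] by blast
  have "card ` ?M \<noteq> {}" using neM by blast
  then have "Max (card ` ?M) \<in> card ` ?M" using finM by (intro Max_in) auto
  then obtain D where D: "D \<in> ?M" "card D = Max (card ` ?M)" by auto
  have finN: "finite N" using matroid_fin[OF assms(1)] .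
  have great: "V \<subseteq> D" if "V \<in> ?M" for V
  proof -
    have "D \<union> V \<in> ?M" using dm_union[OF assms D(1) that] .
    then have "card (D \<union> V) \<le> card D" using D(2) finM by (simp add: Max_ge)
    moreover have "finite (D \<union> V)"
    proof -
      have "D \<union> V \<subseteq> N" using \<open>D \<union> V \<in> ?M\<close> unfolding dm_iff by blast
      then show ?thesis using finN finite_subset by blast
    qed
    ultimately have "D \<union> V = D" by (metis card_seteq sup_ge1)
    then show ?thesis by blast
  qed
  have the: "densest indep N lam = D" unfolding densest_def
  proof (rule the_equality)
    show "D \<in> ?M \<and> (\<forall>U\<in>?M. D \<subseteq> U \<longrightarrow> U = D)" using D(1) great by blast
  next
    fix D' assume a: "D' \<in> ?M \<and> (\<forall>U\<in>?M. D' \<subseteq> U \<longrightarrow> U = D')"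
    then have "D' \<union> D \<in> ?M" using dm_union[OF assms] D(1) by blast
    then have "D' \<union> D = D'" using a by blast
    then show "D' = D" using great a by blast
  qed
  show "densest indep N lam \<in> ?M" using the D(1) by simp
  show "\<And>V. V \<in> ?M \<Longrightarrow> V \<subseteq> densest indep N lam" using the great by simp
qed

lemma densest_sub: assumes "matroid N indep" "0 \<le> lam" shows "densest indep N lam \<subseteq> N"
  using densest_props(1)[OF assms] unfolding dm_iff by blast

lemma densest_max: assumes "matroid N indep" "0 \<le> lam" "V \<subseteq> N" shows
   "fval indep lam V \<le> fval indep lam (densest indep N lam)"
  using densest_props(1)[OF assms(1,2)] assms(3) unfolding dm_iff by blast

lemma densest_nested: assumes "matroid N indep" "0 \<le> lam" "lam \<le> lam'"
  shows "densest indep N lam' \<subseteq> densest indep N lam"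
proof -
  let ?D = "densest indep N lam" and ?E = "densest indep N lam'"
  have l': "0 \<le> lam'" using assms by linarith
  have D: "?D \<subseteq> N" and E: "?E \<subseteq> N" using densest_sub[OF assms(1)] assms(2) l' by auto
  have finN: "finite N" using matroid_fin[OF assms(1)] .
  have sm: "fval indep lam ?D + fval indep lam ?E \<le> fval indep lam (?D \<union> ?E) + fval indep lam (?D \<inter> ?E)"
    using supermod[OF assms(1,2) D E] .
  have rm: "mrank indep (?D \<inter> ?E) \<le> mrank indep ?E" using mrank_mono[OF assms(1)] by blast
  have "fval indep lam' (?D \<inter> ?E) \<le> fval indep lam' ?E" using densest_max[OF assms(1) l'] E by blast
  then have "fval indep lam (?D \<inter> ?E) \<le> fval indep lam ?E"
  proof -
    have h0: "0 \<le> real (mrank indep ?E) - real (mrank indep (?D \<inter> ?E))" using rm by simp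
    have "lam * (real (mrank indep ?E) - real (mrank indep (?D \<inter> ?E))) \<le> lam' * (real (mrank indep ?E) - real (mrank indep (?D \<inter> ?E)))"
      using assms(3) h0 by (rule mult_right_mono)
    then show ?thesis using \<open>fval indep lam' (?D \<inter> ?E) \<le> fval indep lam' ?E\<close> unfolding fval_def by (simp add: algebra_simps)
  qed
  then have "fval indep lam ?D \<le> fval indep lam (?D \<union> ?E)" using sm aux_lin by blast
  then have "?D \<union> ?E \<in> dens_maximizers indep N lam"
  proof -
    have "\<forall>W. W \<subseteq> N \<longrightarrow> fval indep lam W \<le> fval indep lam (?D \<union> ?E)"
    proof (intro allI impI)
      fix W assume "W \<subseteq> N"
      then have "fval indep lam W \<le> fval indep lam ?D" by (rule densest_max[OF assms(1,2)])
      then show "fval indep lam W \<le> fval indep lam (?D \<union> ?E)" using \<open>fval indep lam ?D \<le> fval indep lam (?D \<union> ?E)\<close> by (rule order_trans)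
    qed
    then show ?thesis unfolding dm_iff using D E by blast
  qed
  then show ?thesis using densest_props(2)[OF assms(1,2)] by blast
qed

lemma densest_one: assumes "matroid N indep" "0 \<le> lam" "lam \<le> 1"
  shows "densest indep N lam = N"
proof -
  have finN: "finite N" using matroid_fin[OF assms(1)] .
  have "fval indep lam V \<le> fval indep lam N" if "V \<subseteq> N" for V
  proof -
    have fv: "finite (N - V)" using finN by simp
    have "mrank indep N \<le> mrank indep V + card (N - V)"
      using mrank_un_le[OF assms(1) fv, of V] that by (simp add: Un_absorb1)
    moreover have "card (N - V) = card N - card V" using that finN by (simp add: card_Diff_subset finite_subset)
    moreover have "card V \<le> card N" using that finN by (simp add: card_mono)
    moreover have "mrank indep V \<le> mrank indep N" using mrank_mono[OF assms(1) that] .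
    ultimately have h: "real (mrank indep N) - real (mrank indep V) \<le> real (card N) - real (card V)" by linarith
    have h0: "0 \<le> real (mrank indep N) - real (mrank indep V)" using \<open>mrank indep V \<le> mrank indep N\<close> by simp
    have "lam * (real (mrank indep N) - real (mrank indep V)) \<le> 1 * (real (mrank indep N) - real (mrank indep V))"
      using assms(3) h0 by (rule mult_right_mono)
    then show ?thesis unfolding fval_def using h by (simp add: algebra_simps)
  qed
  then have "N \<in> dens_maximizers indep N lam" unfolding dm_iff by blast
  then show ?thesis using densest_props(2)[OF assms(1,2)] densest_sub[OF assms(1,2)] by blast
qed

lemma densest_big: assumes "matroid N indep" "loopless N indep" "real (card N) < lam"
  shows "densest indep N lam = {}"
proof (rule ccontr)
  assume ne: "densest indep N lam \<noteq> {}"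
  have l: "0 \<le> lam" using assms(3) by linarith
  let ?D = "densest indep N lam"
  have D: "?D \<subseteq> N" using densest_sub[OF assms(1) l] .
  obtain e where e: "e \<in> ?D" using ne by blast
  have r1: "1 \<le> mrank indep ?D" using mrank_pos[OF assms(1,2)] e D by blast
  have cD: "card ?D \<le> card N" using D matroid_fin[OF assms(1)] by (simp add: card_mono)
  have "lam * 1 \<le> lam * real (mrank indep ?D)" using r1 l by (intro mult_left_mono) auto
  then have "fval indep lam ?D < 0" unfolding fval_def using cD assms(3) by linarith
  moreover have "fval indep lam {} \<le> fval indep lam ?D" using densest_max[OF assms(1) l] by blast
  moreover have "fval indep lam {} = 0" unfolding fval_def using mrank_empty[OF assms(1)] by simp
  ultimately show False by linarith
qed



lemma ceil_iff: assumes "0 < t" shows "t \<le> real m \<longleftrightarrow> real (nat \<lceil>t\<rceil>) \<le> real m"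
proof -
  have "real (nat \<lceil>t\<rceil>) = of_int \<lceil>t\<rceil>" using assms by simp
  moreover have "t \<le> real m \<longleftrightarrow> \<lceil>t\<rceil> \<le> int m" by (simp add: ceiling_le_iff)
  ultimately show ?thesis by linarith
qed

lemma rho_ceil: assumes "0 < t"
  shows "rank_density N indep t = rank_density N indep (real (nat \<lceil>t\<rceil>))"
proof -
  have p: "0 < real (nat \<lceil>t\<rceil>)" using assms by simp
  have e1: "(t \<le> real (mrank indep N)) = (real (nat \<lceil>t\<rceil>) \<le> real (mrank indep N))" by (rule ceil_iff[OF assms])
  have e2: "{lam. lam \<ge> 0 \<and> real (mrank indep (densest indep N lam)) \<ge> t} =
            {lam. lam \<ge> 0 \<and> real (mrank indep (densest indep N lam)) \<ge> real (nat \<lceil>t\<rceil>)}"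
    using ceil_iff[OF assms] by blast
  show ?thesis unfolding rank_density_def using assms p e1 e2 by simp
qed

lemma rho_bounds: assumes "matroid N indep" "loopless N indep" "0 < t" "t \<le> real (mrank indep N)"
  shows "1 \<le> rank_density N indep t" "rank_density N indep t \<le> real (card N)"
    "\<And>lam. 0 \<le> lam \<Longrightarrow> t \<le> real (mrank indep (densest indep N lam)) \<Longrightarrow> lam \<le> rank_density N indep t"
proof -
  let ?L = "{lam. lam \<ge> 0 \<and> real (mrank indep (densest indep N lam)) \<ge> t}"
  have rd: "rank_density N indep t = Sup ?L" unfolding rank_density_def using assms(3,4) by simp
  have ub: "lam \<le> real (card N)" if "lam \<in> ?L" for lam
  proof (rule ccontr)
    assume "\<not> lam \<le> real (card N)"
    then have "densest indep N lam = {}" using densest_big[OF assms(1,2)] by simp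
    then show False using that assms(3) mrank_empty[OF assms(1)] by simp
  qed
  have bdd: "bdd_above ?L" using ub by (intro bdd_aboveI) blast
  have one: "1 \<in> ?L" using densest_one[OF assms(1), of 1] assms(4) by simp
  show "1 \<le> rank_density N indep t" unfolding rd using one bdd by (rule cSup_upper)
  show "rank_density N indep t \<le> real (card N)" unfolding rd using ub by (intro cSup_least) (use one in blast)+
  show "\<And>lam. 0 \<le> lam \<Longrightarrow> t \<le> real (mrank indep (densest indep N lam)) \<Longrightarrow> lam \<le> rank_density N indep t"
    unfolding rd using bdd by (intro cSup_upper) auto
qed

lemma rho_zero: "\<not> (0 < t \<and> t \<le> real (mrank indep N)) \<Longrightarrow> rank_density N indep t = 0"
  unfolding rank_density_def by (simp only: if_False)

lemma eta_zero: "eta w n 0 = 0" unfolding eta_def by simp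

lemma F_sum: assumes "matroid N indep" "loopless N indep"
  shows "F_funct w n (rank_density N indep) = (\<Sum>i\<in>{1..mrank indep N}. eta w n (rank_density N indep (real i)))"
proof -
  let ?R = "mrank indep N"
  define g where "g t = eta w n (rank_density N indep t)" for t
  have step: "(g has_integral (\<Sum>i\<in>{1..m}. g (real i))) {0..real m}" if "m \<le> ?R" for m
    using that
  proof (induction m)
    case 0
    then show ?case using has_integral_refl(1)[of g 0] by simp
  next
    case (Suc m)
    have c: "(g has_integral g (real (Suc m))) {real m..real (Suc m)}"
    proof (rule has_integral_spike_finite[of "{real m}"])
      show "finite {real m}" by simp
      show "((\<lambda>x. g (real (Suc m))) has_integral g (real (Suc m))) {real m..real (Suc m)}"
        using has_integral_const_real[of "g (real (Suc m))" "real m" "real (Suc m)"] by simp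
      fix x assume x: "x \<in> {real m..real (Suc m)} - {real m}"
      then have "0 < x" by auto
      moreover have "nat \<lceil>x\<rceil> = Suc m"
      proof -
        have "real m < x" "x \<le> real m + 1" using x by auto
        then have "\<lceil>x\<rceil> = int m + 1" by (intro ceiling_unique) auto
        then show ?thesis by simp
      qed
      ultimately show "g x = g (real (Suc m))" unfolding g_def using rho_ceil by metis
    qed
    have "(g has_integral ((\<Sum>i\<in>{1..m}. g (real i)) + g (real (Suc m)))) {0..real (Suc m)}"
      using has_integral_combine[of 0 "real m" "real (Suc m)" g] Suc c by simp
    then show ?case by (simp add: add.commute)
  qed
  have h1: "(g has_integral (\<Sum>i\<in>{1..?R}. g (real i))) UNIV"
  proof (rule has_integral_on_superset[OF step[OF order_refl]])
    fix x assume "x \<notin> {0..real ?R}"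
    then have "\<not> (0 < x \<and> x \<le> real ?R)" by auto
    then show "g x = 0" unfolding g_def using rho_zero eta_zero by metis
  qed auto
  have "(\<lambda>x. if x \<in> {0<..} then g x else 0) = g"
  proof
    fix x show "(if x \<in> {0<..} then g x else 0) = g x"
      using rho_zero[where t=x and N=N and indep=indep] eta_zero unfolding g_def by auto
  qed
  then have "(g has_integral (\<Sum>i\<in>{1..?R}. g (real i))) {0<..}"
    using h1 has_integral_restrict_UNIV[of "{0<..}" g] by simp
  then show ?thesis unfolding F_funct_def g_def by (rule integral_unique)
qed



definition sw :: "'b \<Rightarrow> 'b \<Rightarrow> 'b \<Rightarrow> 'b" where
  "sw a b x = (if x = a then b else if x = b then a else x)"

lemma sw_sw[simp]: "sw a b (sw a b x) = x" unfolding sw_def by auto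
lemma sw_inj: "sw a b x = sw a b y \<longleftrightarrow> x = y" by (metis sw_sw)
lemma sw_in: "a \<in> S \<Longrightarrow> b \<in> S \<Longrightarrow> x \<in> S \<Longrightarrow> sw a b x \<in> S" unfolding sw_def by auto
lemma sw_bij: "a \<in> S \<Longrightarrow> b \<in> S \<Longrightarrow> bij_betw (sw a b) S S"
  unfolding bij_betw_def inj_on_def
  by (auto simp: sw_inj sw_in) (metis sw_sw sw_in image_eqI)

definition Bs :: "'a set \<Rightarrow> nat set \<Rightarrow> ('a \<Rightarrow> nat) set" where
  "Bs N S = {f. bij_betw f N S \<and> f \<in> extensional N}"

lemma Bs_fin: assumes "finite N" "finite S" shows "finite (Bs N S)"
proof -
  have "Bs N S \<subseteq> (\<Pi>\<^sub>E i \<in> N. S)" unfolding Bs_def bij_betw_def PiE_def by auto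
  moreover have "finite (\<Pi>\<^sub>E i \<in> N. S)" using assms by (intro finite_PiE) auto
  ultimately show ?thesis by (rule finite_subset)
qed

lemma Bs_ne: assumes "finite N" "finite S" "card N = card S" shows "Bs N S \<noteq> {}"
proof -
  obtain h where "bij_betw h N S" using finite_same_card_bij[OF assms] by blast
  then have "restrict h N \<in> Bs N S" unfolding Bs_def by simp
  then show ?thesis by blast
qed

lemma Bs_val: "f \<in> Bs N S \<Longrightarrow> e \<in> N \<Longrightarrow> f e \<in> S"
  unfolding Bs_def bij_betw_def by auto

lemma Bs_swap_le: assumes "finite N" "finite S" "s \<in> S" "s' \<in> S" "e \<in> N"
  shows "card {f \<in> Bs N S. f e = s} \<le> card {f \<in> Bs N S. f e = s'}"
proof -
  define g where "g f = restrict (sw s s' \<circ> f) N" for f :: "'a \<Rightarrow> nat"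
  have inj: "inj_on g {f \<in> Bs N S. f e = s}"
  proof (rule inj_onI)
    fix f1 f2 assume a: "f1 \<in> {f \<in> Bs N S. f e = s}" "f2 \<in> {f \<in> Bs N S. f e = s}" "g f1 = g f2"
    show "f1 = f2"
    proof (rule extensionalityI[of _ N])
      show "f1 \<in> extensional N" "f2 \<in> extensional N" using a unfolding Bs_def by auto
      fix x assume "x \<in> N"
      then have "g f1 x = g f2 x" using a(3) by simp
      then show "f1 x = f2 x" using \<open>x \<in> N\<close> unfolding g_def by (simp add: sw_inj)
    qed
  qed
  have img: "g ` {f \<in> Bs N S. f e = s} \<subseteq> {f \<in> Bs N S. f e = s'}"
  proof
    fix h assume "h \<in> g ` {f \<in> Bs N S. f e = s}"
    then obtain f where f: "f \<in> Bs N S" "f e = s" "h = g f" by blast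
    have "bij_betw (sw s s' \<circ> f) N S" using f(1) sw_bij[OF assms(3,4)] unfolding Bs_def
      by (auto intro: bij_betw_trans)
    then have "h \<in> Bs N S" unfolding Bs_def f(3) g_def by simp
    moreover have "h e = s'" using f assms(5) unfolding g_def sw_def by auto
    ultimately show "h \<in> {f \<in> Bs N S. f e = s'}" by blast
  qed
  show ?thesis using card_inj_on_le[OF inj img] Bs_fin[OF assms(1,2)] by simp
qed

lemma Bs_count: assumes "finite N" "finite S" "card N = card S" "e \<in> N" "s \<in> S"
  shows "card {f \<in> Bs N S. f e = s} * card N = card (Bs N S)"
proof -
  have eq: "card {f \<in> Bs N S. f e = s'} = card {f \<in> Bs N S. f e = s}" if "s' \<in> S" for s'
    using Bs_swap_le[OF assms(1,2) that assms(5) assms(4)] Bs_swap_le[OF assms(1,2) assms(5) that assms(4)] by simp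
  have U: "Bs N S = (\<Union>s'\<in>S. {f \<in> Bs N S. f e = s'})" using Bs_val[OF _ assms(4)] by blast
  have "card (Bs N S) = (\<Sum>s'\<in>S. card {f \<in> Bs N S. f e = s'})"
    by (subst U, rule card_UN_disjoint) (use assms(2) Bs_fin[OF assms(1,2)] in auto)
  also have "\<dots> = (\<Sum>s'\<in>S. card {f \<in> Bs N S. f e = s})" using eq by simp
  finally show ?thesis using assms(3) by simp
qed

lemma card_of_bool: "finite B \<Longrightarrow> real (card {y\<in>B. Q y}) = (\<Sum>y\<in>B. of_bool (Q y))"
proof -
  assume "finite B"
  then have "(\<Sum>y\<in>B. of_bool (Q y)) = (real (card (B \<inter> {y. Q y})))" by (rule sum_of_bool_eq[OF \<open>finite B\<close>])
  moreover have "B \<inter> {y. Q y} = {y\<in>B. Q y}" by blast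
  ultimately show ?thesis by simp
qed
lemma sum_count_swap: assumes "finite A" "finite B"
  shows "(\<Sum>x\<in>A. real (card {y\<in>B. Q x y})) = (\<Sum>y\<in>B. real (card {x\<in>A. Q x y}))"
proof -
  have "(\<Sum>x\<in>A. real (card {y\<in>B. Q x y})) = (\<Sum>x\<in>A. \<Sum>y\<in>B. of_bool (Q x y))"
    using assms(2) by (simp only: card_of_bool)
  also have "\<dots> = (\<Sum>y\<in>B. \<Sum>x\<in>A. of_bool (Q x y))" by (rule sum.swap)
  also have "\<dots> = (\<Sum>y\<in>B. real (card {x\<in>A. Q x y}))"
    using assms(1) by (simp only: card_of_bool)
  finally show ?thesis .
qed

lemma avg_f: assumes "finite N" "finite S" "card N = card S" "Z \<subseteq> N"
  shows "(\<Sum>f\<in>Bs N S. real (card {e\<in>Z. f e \<in> P})) * real (card N)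
        = real (card Z) * real (card (S \<inter> P)) * real (card (Bs N S))"
proof -
  have fZ: "finite Z" using assms(1,4) finite_subset by blast
  have "(\<Sum>f\<in>Bs N S. real (card {e\<in>Z. f e \<in> P})) = (\<Sum>e\<in>Z. real (card {f\<in>Bs N S. f e \<in> P}))"
    by (rule sum_count_swap[OF Bs_fin[OF assms(1,2)] fZ])
  also have "\<dots> = (\<Sum>e\<in>Z. \<Sum>s\<in>S \<inter> P. real (card {f\<in>Bs N S. f e = s}))"
  proof (rule sum.cong[OF refl])
    fix e assume e: "e \<in> Z"
    have eN: "e \<in> N" using e assms(4) by blast
    have U: "{f\<in>Bs N S. f e \<in> P} = (\<Union>s\<in>S \<inter> P. {f \<in> Bs N S. f e = s})"
    proof
      show "{f\<in>Bs N S. f e \<in> P} \<subseteq> (\<Union>s\<in>S \<inter> P. {f \<in> Bs N S. f e = s})"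
      proof
        fix f assume f: "f \<in> {f\<in>Bs N S. f e \<in> P}"
        then have "f e \<in> S" using Bs_val[OF _ eN] by blast
        then show "f \<in> (\<Union>s\<in>S \<inter> P. {f \<in> Bs N S. f e = s})" using f by blast
      qed
    qed blast
    have "card {f\<in>Bs N S. f e \<in> P} = (\<Sum>s\<in>S \<inter> P. card {f \<in> Bs N S. f e = s})"
      by (subst U, rule card_UN_disjoint) (use assms(2) Bs_fin[OF assms(1,2)] in auto)
    then show "real (card {f\<in>Bs N S. f e \<in> P}) = (\<Sum>s\<in>S \<inter> P. real (card {f\<in>Bs N S. f e = s}))"
      by simp
  qed
  finally have h: "(\<Sum>f\<in>Bs N S. real (card {e\<in>Z. f e \<in> P})) = (\<Sum>e\<in>Z. \<Sum>s\<in>S \<inter> P. real (card {f\<in>Bs N S. f e = s}))" .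
  have "(\<Sum>e\<in>Z. \<Sum>s\<in>S \<inter> P. real (card {f\<in>Bs N S. f e = s})) * real (card N)
      = (\<Sum>e\<in>Z. \<Sum>s\<in>S \<inter> P. real (card {f\<in>Bs N S. f e = s}) * real (card N))"
    by (simp only: sum_distrib_right)
  also have "\<dots> = (\<Sum>e\<in>Z. \<Sum>s\<in>S \<inter> P. real (card (Bs N S)))"
  proof (intro sum.cong refl)
    fix e s assume "e \<in> Z" "s \<in> S \<inter> P"
    then show "real (card {f\<in>Bs N S. f e = s}) * real (card N) = real (card (Bs N S))"
    proof -
      have "e \<in> N" "s \<in> S" using \<open>e \<in> Z\<close> \<open>s \<in> S \<inter> P\<close> assms(4) by blast+
      then have "card {f\<in>Bs N S. f e = s} * card N = card (Bs N S)" by (rule Bs_count[OF assms(1,2,3)])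
      then show ?thesis by (simp only: of_nat_mult[symmetric])
    qed
  qed
  also have "\<dots> = real (card Z) * real (card (S \<inter> P)) * real (card (Bs N S))" by simp
  finally show ?thesis using h by simp
qed

definition Cs :: "nat \<Rightarrow> nat \<Rightarrow> nat set set" where
  "Cs n k = {S. S \<subseteq> {1..n} \<and> card S = k}"

lemma Cs_fin: "finite (Cs n k)"
  unfolding Cs_def by (rule finite_subset[of _ "Pow {1..n}"]) auto

lemma Cs_card: "card (Cs n k) = n choose k"
  unfolding Cs_def using n_subsets[of "{1..n}" k] by simp

lemma Cs_swap_le: assumes "p \<in> {1..n}" "p' \<in> {1..n}"
  shows "card {S \<in> Cs n k. p \<in> S} \<le> card {S \<in> Cs n k. p' \<in> S}"
proof -
  define g where "g S = sw p p' ` S" for S :: "nat set"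
  have inj: "inj_on g {S \<in> Cs n k. p \<in> S}"
  proof (rule inj_onI)
    fix S1 S2 assume "g S1 = g S2"
    then have "sw p p' ` g S1 = sw p p' ` g S2" by simp
    moreover have "sw p p' ` g S = S" for S unfolding g_def image_comp by (simp add: comp_def)
    ultimately show "S1 = S2" by simp
  qed
  have img: "g ` {S \<in> Cs n k. p \<in> S} \<subseteq> {S \<in> Cs n k. p' \<in> S}"
  proof
    fix T assume "T \<in> g ` {S \<in> Cs n k. p \<in> S}"
    then obtain S where S: "S \<subseteq> {1..n}" "card S = k" "p \<in> S" "T = g S" unfolding Cs_def by blast
    have "T \<subseteq> {1..n}" using S sw_in[OF assms] unfolding g_def by blast
    moreover have "card T = k" using S unfolding g_def
      by (metis card_image inj_on_def sw_inj)
    moreover have "p' \<in> T" using S(3) unfolding S(4) g_def sw_def by force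
    ultimately show "T \<in> {S \<in> Cs n k. p' \<in> S}" unfolding Cs_def by blast
  qed
  show ?thesis using card_inj_on_le[OF inj img] Cs_fin by simp
qed

lemma Cs_count: assumes "p \<in> {1..n}"
  shows "real (card {S \<in> Cs n k. p \<in> S}) * real n = real k * real (card (Cs n k))"
proof -
  have eq: "card {S \<in> Cs n k. p' \<in> S} = card {S \<in> Cs n k. p \<in> S}" if "p' \<in> {1..n}" for p'
    using Cs_swap_le[OF assms that, where k=k] Cs_swap_le[OF that assms, where k=k] by simp
  have "(\<Sum>p'\<in>{1..n}. real (card {S \<in> Cs n k. p' \<in> S})) = (\<Sum>S\<in>Cs n k. real (card {p'\<in>{1..n}. p' \<in> S}))"
    by (rule sum_count_swap) (auto simp: Cs_fin)
  also have "\<dots> = (\<Sum>S\<in>Cs n k. real k)"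
  proof (rule sum.cong[OF refl])
    fix S assume "S \<in> Cs n k"
    then have "{p'\<in>{1..n}. p' \<in> S} = S" "card S = k" unfolding Cs_def by auto
    then show "real (card {p'\<in>{1..n}. p' \<in> S}) = real k" by simp
  qed
  finally have "(\<Sum>p'\<in>{1..n}. real (card {S \<in> Cs n k. p \<in> S})) = real k * real (card (Cs n k))"
    using eq by simp
  then show ?thesis by (simp add: mult.commute)
qed

lemma avg_S: assumes "P \<subseteq> {1..n}"
  shows "(\<Sum>S\<in>Cs n k. real (card (S \<inter> P))) * real n = real (card P) * real k * real (card (Cs n k))"
proof -
  have fP: "finite P" using assms finite_subset by blast
  have "(\<Sum>S\<in>Cs n k. real (card (S \<inter> P))) = (\<Sum>S\<in>Cs n k. real (card {p\<in>P. p \<in> S}))"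
    by (intro sum.cong refl arg_cong[where f="\<lambda>x. real (card x)"]) blast
  also have "\<dots> = (\<Sum>p\<in>P. real (card {S\<in>Cs n k. p \<in> S}))"
    by (rule sum_count_swap[symmetric]) (auto simp: Cs_fin fP)
  finally have h: "(\<Sum>S\<in>Cs n k. real (card (S \<inter> P))) = (\<Sum>p\<in>P. real (card {S\<in>Cs n k. p \<in> S}))" .
  have "(\<Sum>p\<in>P. real (card {S\<in>Cs n k. p \<in> S})) * real n = (\<Sum>p\<in>P. real (card {S\<in>Cs n k. p \<in> S}) * real n)"
    by (simp add: sum_distrib_right)
  also have "\<dots> = (\<Sum>p\<in>P. real k * real (card (Cs n k)))"
    using Cs_count assms by (intro sum.cong refl) blast
  finally show ?thesis using h by simp
qed



lemma choose_Suc_rec: "Suc m * (x choose Suc m) = (x - m) * (x choose m)"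
  using binomial_absorption[of m x] binomial_absorb_comp[of x m] by simp

lemma binom_ratio_nat: assumes "a \<le> b" shows "(a choose m) * b ^ m \<le> (b choose m) * a ^ m"
proof (induction m)
  case 0 then show ?case by simp
next
  case (Suc m)
  have k: "(a - m) * b \<le> (b - m) * a"
  proof (cases "m \<le> a")
    case True
    have "real ((a - m) * b) = (real a - real m) * real b" using True by (simp add: of_nat_diff)
    also have "\<dots> \<le> (real b - real m) * real a"
    proof -
      have "real a * real m \<le> real b * real m" using assms by (intro mult_right_mono) auto
      then show ?thesis by (simp add: algebra_simps)
    qed
    also have "\<dots> = real ((b - m) * a)" using True assms by (simp add: of_nat_diff)
    finally show ?thesis by linarith
  qed simp
  have "Suc m * ((a choose Suc m) * b ^ Suc m) = (Suc m * (a choose Suc m)) * b ^ Suc m" by (simp only: mult.assoc)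
  also have "\<dots> = ((a - m) * (a choose m)) * b ^ Suc m" by (simp only: choose_Suc_rec)
  also have "\<dots> = ((a choose m) * b ^ m) * ((a - m) * b)" by (simp only: power_Suc mult_ac)
  also have "\<dots> \<le> ((b choose m) * a ^ m) * ((b - m) * a)"
    by (rule mult_mono[OF Suc.IH k]) auto
  also have "\<dots> = ((b - m) * (b choose m)) * a ^ Suc m" by (simp only: power_Suc mult_ac)
  also have "\<dots> = (Suc m * (b choose Suc m)) * a ^ Suc m" by (simp only: choose_Suc_rec)
  also have "\<dots> = Suc m * ((b choose Suc m) * a ^ Suc m)" by (simp only: mult.assoc)
  finally show ?case by (meson mult_le_cancel1 zero_less_Suc)
qed

lemma binom_ratio: assumes "m \<le> n" "q \<le> n" "0 < n"
  shows "real ((n - q) choose m) / real (n choose m) \<le> (1 - real q / real n) ^ m"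
proof -
  have pos: "0 < real (n choose m)" using assms by simp
  have "real ((n - q) choose m) * real n ^ m \<le> real (n choose m) * real (n - q) ^ m"
    using binom_ratio_nat[of "n - q" n m] by (metis diff_le_self of_nat_le_iff of_nat_mult of_nat_power)
  moreover have "(1 - real q / real n) ^ m = real (n - q) ^ m / real n ^ m"
    using assms by (simp add: of_nat_diff field_simps power_divide)
  ultimately show ?thesis using pos assms by (simp add: field_simps)
qed

lemma miss_bound: assumes "0 \<le> x" "x \<le> 1"
  shows "(1 - x) ^ m * (1 + real m * x) \<le> 1"
proof -
  have "1 + real m * x \<le> (1 + x) ^ m" using Bernoulli_inequality[of x m] assms by simp
  then have "(1 - x) ^ m * (1 + real m * x) \<le> (1 - x) ^ m * (1 + x) ^ m"
    using assms by (intro mult_left_mono) auto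
  also have "\<dots> = (1 - x * x) ^ m" by (simp add: power_mult_distrib[symmetric] algebra_simps)
  also have "\<dots> \<le> 1" using assms by (intro power_le_one) (auto simp: mult_le_one)
  finally show ?thesis .
qed

lemma hit_bound: assumes "m \<le> n" "q \<le> n" "0 < n"
  shows "min 1 (real m * (real q / real n)) / 2 \<le> 1 - real ((n - q) choose m) / real (n choose m)"
proof -
  define x where "x = real q / real n"
  have x0: "0 \<le> x" and x1: "x \<le> 1" using assms unfolding x_def by auto
  define r where "r = real ((n - q) choose m) / real (n choose m)"
  have r0: "0 \<le> r" unfolding r_def by simp
  have "r \<le> (1 - x) ^ m" using binom_ratio[OF assms] unfolding r_def x_def .
  then have "r * (1 + real m * x) \<le> (1 - x) ^ m * (1 + real m * x)"
    using x0 by (intro mult_right_mono) auto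
  also have "\<dots> \<le> 1" by (rule miss_bound[OF x0 x1])
  finally have rb: "r * (1 + real m * x) \<le> 1" .
  have y0: "0 \<le> real m * x" using x0 by simp
  have "min 1 (real m * x) / 2 \<le> 1 - r"
  proof (cases "real m * x \<le> 1")
    case True
    have "r * (1 + real m * x) \<le> 1" by (rule rb)
    have p1: "0 < 1 + real m * x" using y0 by linarith
    have "r \<le> 1 / (1 + real m * x)" using rb p1 by (simp add: pos_le_divide_eq)
    also have "\<dots> \<le> 1 - real m * x / 2"
    proof -
      have yy: "(real m * x) * (real m * x) \<le> real m * x" using True y0 by (simp add: mult_left_le)
      have "1 \<le> (1 - real m * x / 2) * (1 + real m * x)" using yy by (simp add: algebra_simps)
      then show ?thesis using p1 by (simp add: divide_le_eq)
    qed
    finally have "r \<le> 1 - real m * x / 2" .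
    then show ?thesis using True by simp
  next
    case False
    then have "r * 2 \<le> r * (1 + real m * x)" using r0 by (intro mult_left_mono) auto
    then have "r \<le> 1/2" using rb by linarith
    then show ?thesis using False by simp
  qed
  then show ?thesis unfolding x_def r_def .
qed

definition hcut :: "real \<Rightarrow> real \<Rightarrow> real" where
  "hcut a \<theta> = (if \<theta> < a then 1 else 0)"

lemma hcut_integral: assumes "0 \<le> a" "a \<le> M" shows "(hcut a has_integral a) {0..M}"
proof -
  have i1: "(hcut a has_integral a) {0..a}"
  proof (rule has_integral_spike_finite[of "{a}"])
    show "((\<lambda>x. 1) has_integral a) {0..a}" using has_integral_const_real[of "1::real" 0 a] assms by simp
  qed (auto simp: hcut_def)
  have i2: "(hcut a has_integral 0) {a..M}"
  proof -
    have "((\<lambda>x. 0::real) has_integral 0) {a..M}" by (rule has_integral_0)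
    then show ?thesis by (rule has_integral_eq[rotated]) (auto simp: hcut_def)
  qed
  show ?thesis using has_integral_combine[OF assms i1 i2] by simp
qed

lemma antimono_integrable: fixes f :: "real \<Rightarrow> real"
  assumes "\<And>x y. x \<le> y \<Longrightarrow> f y \<le> f x" shows "f integrable_on {a..b}"
proof -
  have "mono_on {a..b} (\<lambda>x. - f x)" using assms by (auto simp: mono_on_def)
  then have "(\<lambda>x. - f x) integrable_on {a..b}" by (rule integrable_on_mono_on)
  then have "(\<lambda>x. - (- f x)) integrable_on {a..b}" by (rule integrable_neg)
  then show ?thesis by simp
qed



lemma layer_sum:
  fixes a :: "nat \<Rightarrow> nat" and g G :: "nat \<Rightarrow> real"
  assumes mono: "\<And>j. 1 \<le> j \<Longrightarrow> j < J \<Longrightarrow> a (Suc j) \<le> a j"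
    and gG: "\<And>i j. 1 \<le> i \<Longrightarrow> i \<le> a j \<Longrightarrow> 1 \<le> j \<Longrightarrow> j \<le> J \<Longrightarrow> G j \<le> g i"
  shows "d = J - s \<Longrightarrow> 1 \<le> s \<Longrightarrow> s \<le> J \<Longrightarrow>
    G J * real (a J) + (\<Sum>j\<in>{s..<J}. G j * (real (a j) - real (a (Suc j)))) \<le> (\<Sum>i\<in>{1..a s}. g i)"
proof (induction d arbitrary: s)
  case 0
  then have s: "s = J" by simp
  have "(\<Sum>i\<in>{1..a J}. G J) \<le> (\<Sum>i\<in>{1..a J}. g i)"
    using gG 0 s by (intro sum_mono) auto
  then show ?case using s by (simp add: mult.commute)
next
  case (Suc d)
  have sJ: "s < J" using Suc.prems by linarith
  have IH: "G J * real (a J) + (\<Sum>j\<in>{Suc s..<J}. G j * (real (a j) - real (a (Suc j)))) \<le> (\<Sum>i\<in>{1..a (Suc s)}. g i)"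
    using Suc.IH[of "Suc s"] Suc.prems sJ by simp
  have am: "a (Suc s) \<le> a s" using mono Suc.prems sJ by simp
  have split: "{1..a s} = {1..a (Suc s)} \<union> {a (Suc s)<..a s}" using am by auto
  have "(\<Sum>i\<in>{1..a s}. g i) = (\<Sum>i\<in>{1..a (Suc s)}. g i) + (\<Sum>i\<in>{a (Suc s)<..a s}. g i)"
    unfolding split by (rule sum.union_disjoint) auto
  moreover have "(\<Sum>i\<in>{a (Suc s)<..a s}. G s) \<le> (\<Sum>i\<in>{a (Suc s)<..a s}. g i)"
    using gG Suc.prems sJ by (intro sum_mono) auto
  moreover have "(\<Sum>i\<in>{a (Suc s)<..a s}. G s) = G s * (real (a s) - real (a (Suc s)))"
    using am by (simp add: of_nat_diff mult.commute)
  moreover have "(\<Sum>j\<in>{s..<J}. G j * (real (a j) - real (a (Suc j)))) =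
      G s * (real (a s) - real (a (Suc s))) + (\<Sum>j\<in>{Suc s..<J}. G j * (real (a j) - real (a (Suc j))))"
    using sJ by (rule sum.atLeast_Suc_lessThan)
  ultimately show ?case using IH by linarith
qed

lemma telescope_real: assumes "1 \<le> J" shows "(\<Sum>j\<in>{1..<J}. (c j - c (Suc j))) = c 1 - (c J :: real)"
proof -
  have "(\<Sum>j\<in>{1..<J}. (c (Suc j) - c j)) = c J - c 1" by (rule sum_Suc_diff'[OF assms])
  moreover have "(\<Sum>j\<in>{1..<J}. (c j - c (Suc j))) = - (\<Sum>j\<in>{1..<J}. (c (Suc j) - c j))"
    by (simp add: sum_negf[symmetric])
  ultimately show ?thesis by simp
qed

lemma pointwise_layer:
  assumes M: "matroid N indep" and L: "loopless N indep" and p0: "0 \<le> p" and p1: "p \<le> 1"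
  shows "\<exists>Y. Y \<subseteq> N \<and> real (mrank indep Y) + real (card (N - Y)) * p
     \<le> 2 * (\<Sum>i\<in>{1..mrank indep N}. min 1 (real (nat \<lfloor>rank_density N indep (real i)\<rfloor>) * p))"
proof -
  define k where "k = card N"
  define D where "D j = densest indep N (real j)" for j :: nat
  define a where "a j = mrank indep (D j)" for j
  define c where "c j = real (card (D j))" for j
  define g where "g i = min 1 (real (nat \<lfloor>rank_density N indep (real i)\<rfloor>) * p)" for i :: nat
  define G where "G j = min 1 (real j * p)" for j :: nat
  define J where "J = (if p = 0 then Suc k else min (nat \<lceil>1/p\<rceil>) (Suc k))"
  have finN: "finite N" using matroid_fin[OF M] .
  have Dsub: "D j \<subseteq> N" for j unfolding D_def by (rule densest_sub[OF M]) simp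
  have D1: "D 1 = N" unfolding D_def using densest_one[OF M, of 1] by simp
  have Dk: "D (Suc k) = {}" unfolding D_def k_def by (rule densest_big[OF M L]) simp
  have Dnest: "D (Suc j) \<subseteq> D j" for j unfolding D_def by (rule densest_nested[OF M]) auto
  have amono: "a (Suc j) \<le> a j" for j unfolding a_def using Dnest mrank_mono[OF M] by blast
  have aR: "a j \<le> mrank indep N" for j unfolding a_def using Dsub mrank_mono[OF M] by blast
  have cdiff: "c j - c (Suc j) \<le> real (Suc j) * (real (a j) - real (a (Suc j)))" for j
  proof -
    have "fval indep (real (Suc j)) (D j) \<le> fval indep (real (Suc j)) (D (Suc j))"
      unfolding D_def by (rule densest_max[OF M]) (use Dsub[of j] in \<open>auto simp: D_def\<close>)
    then show ?thesis unfolding fval_def c_def a_def by (simp add: algebra_simps)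
  qed
  have J1: "1 \<le> J"
  proof (cases "p = 0")
    case False
    then have "1 \<le> 1 / p" using p0 p1 by (simp add: le_divide_eq)
    then have "(1::real) \<le> of_int \<lceil>1/p\<rceil>" using le_of_int_ceiling order_trans by blast
    then have c1: "1 \<le> \<lceil>1/p\<rceil>" by simp
    have "nat 1 \<le> nat \<lceil>1/p\<rceil>" by (rule nat_mono[OF c1])
    then have "1 \<le> nat \<lceil>1/p\<rceil>" by simp
    then show ?thesis unfolding J_def using False by (simp add: min_def)
  qed (simp add: J_def)
  have Jk: "J \<le> Suc k" unfolding J_def by simp
  have Jlow: "real j * p \<le> 1" if "j < J" for j
  proof (cases "p = 0")
    case False
    then have "int j < \<lceil>1/p\<rceil>" using that unfolding J_def by (simp add: zless_nat_eq_int_zless)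
    then have "real j < 1 / p" by (simp add: less_ceiling_iff)
    then show ?thesis using False p0 by (simp add: field_simps)
  qed simp
  have Jhigh: "1 \<le> real J * p" if "0 < a J"
  proof -
    have "J \<noteq> Suc k" using that Dk mrank_empty[OF M] unfolding a_def by auto
    then have pn: "p \<noteq> 0" and Jeq: "J = nat \<lceil>1/p\<rceil>" unfolding J_def by (auto split: if_splits)
    have pp: "0 < p" using pn p0 by simp
    have "0 < 1 / p" using pp by simp
    then have cpos: "0 \<le> \<lceil>1/p\<rceil>" by (simp only: zero_le_ceiling)
    have "real J = of_int \<lceil>1/p\<rceil>" using Jeq cpos by simp
    moreover have "1 / p \<le> of_int \<lceil>1/p\<rceil>" by (rule le_of_int_ceiling)
    ultimately have "1 / p \<le> real J" by simp
    then show ?thesis using pn p0 by (simp add: field_simps)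
  qed
  have gG: "G j \<le> g i" if "1 \<le> i" "i \<le> a j" "1 \<le> j" "j \<le> J" for i j
  proof -
    have "real j \<le> rank_density N indep (real i)"
    proof (rule rho_bounds(3)[OF M L])
      show "0 < real i" using that by simp
      show "real i \<le> real (mrank indep N)" using that aR[of j] by simp
      show "0 \<le> real j" by simp
      show "real i \<le> real (mrank indep (densest indep N (real j)))" using that unfolding a_def D_def by simp
    qed
    then have "int j \<le> \<lfloor>rank_density N indep (real i)\<rfloor>" by (simp add: le_floor_iff)
    then have "j \<le> nat \<lfloor>rank_density N indep (real i)\<rfloor>" by simp
    then have "real j * p \<le> real (nat \<lfloor>rank_density N indep (real i)\<rfloor>) * p" using p0 by (intro mult_right_mono) auto
    then show ?thesis unfolding G_def g_def by simp
  qed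
  have LS: "G J * real (a J) + (\<Sum>j\<in>{1..<J}. G j * (real (a j) - real (a (Suc j)))) \<le> (\<Sum>i\<in>{1..a 1}. g i)"
    by (rule layer_sum[of J a G g, OF _ _ refl order_refl J1]) (use amono gG in auto)
  have t1: "real (a J) \<le> G J * real (a J)"
  proof (cases "a J = 0")
    case False then show ?thesis using Jhigh[of] unfolding G_def by simp
  qed simp
  have t2: "p / 2 * (c j - c (Suc j)) \<le> G j * (real (a j) - real (a (Suc j)))" if "j \<in> {1..<J}" for j
  proof -
    have Gj: "G j = real j * p" unfolding G_def using Jlow[of j] that by simp
    have da: "0 \<le> real (a j) - real (a (Suc j))" using amono[of j] by simp
    have "p / 2 * (c j - c (Suc j)) \<le> p / 2 * (real (Suc j) * (real (a j) - real (a (Suc j))))"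
      using cdiff[of j] p0 by (intro mult_left_mono) auto
    also have "\<dots> \<le> real j * p * (real (a j) - real (a (Suc j)))"
    proof -
      have j1: "1 \<le> real j" using that by simp
      have "p * 1 \<le> p * real j" by (rule mult_left_mono[OF j1 p0])
      then have "p / 2 * real (Suc j) \<le> real j * p" by (simp add: field_simps)
      then show ?thesis using da by (metis mult.assoc mult_right_mono)
    qed
    finally show ?thesis using Gj by simp
  qed
  have "(\<Sum>j\<in>{1..<J}. p / 2 * (c j - c (Suc j))) \<le> (\<Sum>j\<in>{1..<J}. G j * (real (a j) - real (a (Suc j))))"
    using t2 by (rule sum_mono)
  moreover have "(\<Sum>j\<in>{1..<J}. p / 2 * (c j - c (Suc j))) = p / 2 * (c 1 - c J)"
  proof -
    have "(\<Sum>j\<in>{1..<J}. p / 2 * (c j - c (Suc j))) = p / 2 * (\<Sum>j\<in>{1..<J}. (c j - c (Suc j)))"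
      by (rule sum_distrib_left[symmetric])
    then show ?thesis using telescope_real[OF J1, of c] by simp
  qed
  ultimately have main: "real (a J) + p / 2 * (c 1 - c J) \<le> (\<Sum>i\<in>{1..a 1}. g i)" using LS t1 by linarith
  have cN: "real (card (N - D J)) = c 1 - c J"
    unfolding c_def using D1 Dsub[of J] finN by (simp add: card_Diff_subset finite_subset of_nat_diff card_mono)
  have aJ0: "0 \<le> real (a J)" by simp
  show ?thesis
  proof (intro exI conjI)
    show "D J \<subseteq> N" by (rule Dsub)
    have "real (mrank indep (D J)) + real (card (N - D J)) * p = real (a J) + (c 1 - c J) * p"
      unfolding a_def cN ..
    also have "\<dots> \<le> 2 * (real (a J) + p / 2 * (c 1 - c J))" using aJ0 by (simp add: algebra_simps)
    also have "\<dots> \<le> 2 * (\<Sum>i\<in>{1..a 1}. g i)" using main by simp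
    also have "a 1 = mrank indep N" unfolding a_def D1 ..
    finally show "real (mrank indep (D J)) + real (card (N - D J)) * p
      \<le> 2 * (\<Sum>i\<in>{1..mrank indep N}. min 1 (real (nat \<lfloor>rank_density N indep (real i)\<rfloor>) * p))"
      unfolding g_def .
  qed
qed



lemma thr_antimono: fixes c :: "'a \<Rightarrow> real" and x y :: real assumes M: "matroid N indep"
  shows "x \<le> y \<Longrightarrow> real (mrank indep {e\<in>N. y < c e}) \<le> real (mrank indep {e\<in>N. x < c e})"
proof -
  assume "x \<le> y"
  then have "{e\<in>N. y < c e} \<subseteq> {e\<in>N. x < c e}" by (auto intro: order_le_less_trans)
  then show ?thesis using mrank_mono[OF M] by simp
qed

lemma opt_bound: assumes M: "matroid N indep" and c: "\<And>e. e \<in> N \<Longrightarrow> 0 \<le> c e \<and> c e \<le> B"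
  shows "opt_weight N indep c \<le> integral {0..B} (\<lambda>\<theta>. real (mrank indep {e\<in>N. \<theta> < c e}))"
proof -
  let ?A = "(\<lambda>I. \<Sum>e\<in>I. c e) ` {I. I \<subseteq> N \<and> indep I}"
  have fin: "finite {I. I \<subseteq> N \<and> indep I}" by (rule mrank_fin[OF M])
  have ne: "?A \<noteq> {}" using indep_empty[OF M] by blast
  have "Max ?A \<in> ?A" using fin ne by (intro Max_in) auto
  then obtain I where I: "I \<subseteq> N" "indep I" "opt_weight N indep c = (\<Sum>e\<in>I. c e)"
    unfolding opt_weight_def by auto
  have fI: "finite I" using indep_fin[OF M I(2)] .
  have hi: "((\<lambda>\<theta>. \<Sum>e\<in>I. hcut (c e) \<theta>) has_integral (\<Sum>e\<in>I. c e)) {0..B}"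
  proof (rule has_integral_sum[OF fI])
    fix e assume "e \<in> I"
    then have "0 \<le> c e" "c e \<le> B" using c I(1) by auto
    then show "(hcut (c e) has_integral c e) {0..B}" by (rule hcut_integral)
  qed
  have int2: "(\<lambda>\<theta>. real (mrank indep {e\<in>N. \<theta> < c e})) integrable_on {0..B}"
    by (rule antimono_integrable) (rule thr_antimono[OF M])
  have "(\<Sum>e\<in>I. c e) \<le> integral {0..B} (\<lambda>\<theta>. real (mrank indep {e\<in>N. \<theta> < c e}))"
  proof (rule has_integral_le[OF hi integrable_integral[OF int2]])
    fix \<theta> :: real
    have "(\<Sum>e\<in>I. hcut (c e) \<theta>) = (\<Sum>e\<in>I. of_bool (\<theta> < c e))" unfolding hcut_def by (simp add: of_bool_def)
    also have "\<dots> = real (card {e\<in>I. \<theta> < c e})" using card_of_bool[OF fI, of "\<lambda>e. \<theta> < c e"] by simp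
    also have "\<dots> \<le> real (mrank indep {e\<in>N. \<theta> < c e})"
    proof -
      have sub: "{e\<in>I. \<theta> < c e} \<subseteq> {e\<in>N. \<theta> < c e}" using I(1) by blast
      have ind: "indep {e\<in>I. \<theta> < c e}" by (rule indep_down[OF M I(2)]) auto
      have "card {e\<in>I. \<theta> < c e} \<le> mrank indep {e\<in>N. \<theta> < c e}" by (rule mrank_ge[OF M sub ind])
      then show ?thesis by simp
    qed
    finally show "(\<Sum>e\<in>I. hcut (c e) \<theta>) \<le> real (mrank indep {e\<in>N. \<theta> < c e})" .
  qed
  then show ?thesis using I(3) by simp
qed

lemma eta_integral: assumes w: "\<And>i. i \<in> {1..n} \<Longrightarrow> 0 \<le> w i \<and> w i \<le> B"
  and a1: "1 \<le> a" and m: "m = nat \<lfloor>a\<rfloor>"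
  shows "((\<lambda>\<theta>. (\<Sum>R\<in>Cs n m. hcut (Max (w ` R)) \<theta>) / real (n choose m)) has_integral eta w n a) {0..B}"
proof -
  have m1: "1 \<le> m" using a1 m by linarith
  have e: "eta w n a = (\<Sum>R\<in>Cs n m. Max (w ` R)) / real (n choose m)"
    unfolding eta_def Cs_def using a1 m by simp
  have "((\<lambda>\<theta>. \<Sum>R\<in>Cs n m. hcut (Max (w ` R)) \<theta>) has_integral (\<Sum>R\<in>Cs n m. Max (w ` R))) {0..B}"
  proof (rule has_integral_sum[OF Cs_fin])
    fix R assume R: "R \<in> Cs n m"
    then have Rs: "R \<subseteq> {1..n}" "card R = m" unfolding Cs_def by auto
    have fR: "finite R" using Rs(1) finite_subset by blast
    have neR: "R \<noteq> {}" using Rs(2) m1 by auto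
    have "Max (w ` R) \<in> w ` R" using fR neR by (intro Max_in) auto
    then obtain x where x: "x \<in> R" "Max (w ` R) = w x" by auto
    have "0 \<le> Max (w ` R)" "Max (w ` R) \<le> B" using x w Rs(1) by auto
    then show "(hcut (Max (w ` R)) has_integral Max (w ` R)) {0..B}" by (rule hcut_integral)
  qed
  then show ?thesis unfolding e by (rule has_integral_divide)
qed

lemma hit_value: assumes m1: "1 \<le> m"
  shows "(\<Sum>R\<in>Cs n m. hcut (Max (w ` R)) \<theta>)
    = real (n choose m) - real ((n - card {i\<in>{1..n}. \<theta> < w i}) choose m)"
proof -
  let ?P = "{i\<in>{1..n}. \<theta> < w i}"
  let ?Q = "{R \<in> Cs n m. \<not> \<theta> < Max (w ` R)}"
  have eqQ: "?Q = {R. R \<subseteq> {1..n} - ?P \<and> card R = m}"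
  proof (intro set_eqI iffI)
    fix R assume "R \<in> ?Q"
    then have Rs: "R \<subseteq> {1..n}" "card R = m" "\<not> \<theta> < Max (w ` R)" unfolding Cs_def by auto
    have fR: "finite R" using Rs(1) finite_subset by blast
    have neR: "R \<noteq> {}" using Rs(2) m1 by auto
    have "\<forall>x\<in>R. \<not> \<theta> < w x" using Rs(3) Max_gr_iff[of "w ` R" \<theta>] fR neR by auto
    then show "R \<in> {R. R \<subseteq> {1..n} - ?P \<and> card R = m}" using Rs by auto
  next
    fix R assume "R \<in> {R. R \<subseteq> {1..n} - ?P \<and> card R = m}"
    then have Rs: "R \<subseteq> {1..n}" "card R = m" "\<forall>x\<in>R. \<not> \<theta> < w x" by auto
    have fR: "finite R" using Rs(1) finite_subset by blast
    have neR: "R \<noteq> {}" using Rs(2) m1 by auto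
    have "\<not> \<theta> < Max (w ` R)" using Rs(3) Max_gr_iff[of "w ` R" \<theta>] fR neR by auto
    then show "R \<in> ?Q" using Rs unfolding Cs_def by auto
  qed
  have cQ: "card ?Q = (n - card ?P) choose m"
  proof -
    have "card ?Q = card ({1..n} - ?P) choose m" unfolding eqQ by (rule n_subsets) simp
    moreover have "card ({1..n} - ?P) = n - card ?P" by (subst card_Diff_subset) auto
    ultimately show ?thesis by simp
  qed
  have "(\<Sum>R\<in>Cs n m. hcut (Max (w ` R)) \<theta>) = (\<Sum>R\<in>Cs n m. of_bool (\<theta> < Max (w ` R)))"
    unfolding hcut_def by (simp add: of_bool_def)
  also have "\<dots> = real (card {R\<in>Cs n m. \<theta> < Max (w ` R)})" using card_of_bool[OF Cs_fin] by simp
  also have "{R\<in>Cs n m. \<theta> < Max (w ` R)} = Cs n m - ?Q" by blast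
  also have "real (card (Cs n m - ?Q)) = real (card (Cs n m)) - real (card ?Q)"
    by (subst card_Diff_subset) (auto intro: finite_subset[OF _ Cs_fin] simp: of_nat_diff card_mono Cs_fin)
  finally show ?thesis using cQ Cs_card by simp
qed



lemma per_f: assumes M: "matroid N indep" and Y: "Y \<subseteq> N" and f: "f \<in> Bs N S" and S: "S \<subseteq> {1..n}"
  shows "real (mrank indep {e\<in>N. \<theta> < w (f e)}) \<le> real (mrank indep Y) + real (card {e\<in>N - Y. f e \<in> {i\<in>{1..n}. \<theta> < w i}})"
proof -
  let ?Z = "{e\<in>N - Y. f e \<in> {i\<in>{1..n}. \<theta> < w i}}"
  have finZ: "finite ?Z" using matroid_fin[OF M] by simp
  have sub: "{e\<in>N. \<theta> < w (f e)} \<subseteq> Y \<union> ?Z"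
  proof
    fix e assume e: "e \<in> {e\<in>N. \<theta> < w (f e)}"
    then have "f e \<in> S" using Bs_val[OF f] by blast
    then show "e \<in> Y \<union> ?Z" using e S by auto
  qed
  have "mrank indep {e\<in>N. \<theta> < w (f e)} \<le> mrank indep (Y \<union> ?Z)" by (rule mrank_mono[OF M sub])
  also have "\<dots> \<le> mrank indep Y + card ?Z" by (rule mrank_un_le[OF M finZ])
  finally show ?thesis by linarith
qed

lemma avg_bound:
  assumes M: "matroid N indep" and kn: "card N \<le> n" and Y: "Y \<subseteq> N"
  shows "(\<Sum>S\<in>Cs n (card N). (\<Sum>f\<in>Bs N S. real (mrank indep {e\<in>N. \<theta> < w (f e)})) / real (card (Bs N S)))
           / real (card (Cs n (card N)))
         \<le> real (mrank indep Y) + real (card (N - Y)) * (real (card {i\<in>{1..n}. \<theta> < w i}) / real n)"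
  (is "?L \<le> ?R")
proof -
  define P where "P = {i\<in>{1..n}. \<theta> < w i}"
  define k where "k = card N"
  have finN: "finite N" using matroid_fin[OF M] .
  have R0: "0 \<le> ?R" by simp
  show ?thesis
  proof (cases "N = {}")
    case True
    have "mrank indep {e\<in>N. \<theta> < w (f e)} = 0" for f using True mrank_empty[OF M] by simp
    then have L0: "?L = 0" by simp
    show ?thesis using L0 R0 by linarith
  next
    case False
    have k0: "0 < k" unfolding k_def using False finN by (simp add: card_gt_0_iff)
    have n0: "0 < n" using k0 kn unfolding k_def by linarith
    have Cpos: "0 < real (card (Cs n k))" unfolding Cs_card using kn unfolding k_def by simp
    have PS: "P \<subseteq> {1..n}" unfolding P_def by blast
    let ?r = "real (mrank indep Y)" and ?z = "real (card (N - Y))"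
    have perS: "(\<Sum>f\<in>Bs N S. real (mrank indep {e\<in>N. \<theta> < w (f e)})) / real (card (Bs N S))
        \<le> ?r + ?z * real (card (S \<inter> P)) / real k" if S: "S \<in> Cs n k" for S
    proof -
      have Ss: "S \<subseteq> {1..n}" "card S = k" using S unfolding Cs_def by auto
      have fS: "finite S" using Ss(1) finite_subset by blast
      have ck: "card N = card S" using Ss(2) k_def by simp
      have finB: "finite (Bs N S)" by (rule Bs_fin[OF finN fS])
      have Bpos: "0 < real (card (Bs N S))" using Bs_ne[OF finN fS ck] finB by (simp add: card_gt_0_iff)
      have "(\<Sum>f\<in>Bs N S. real (mrank indep {e\<in>N. \<theta> < w (f e)})) \<le>
            (\<Sum>f\<in>Bs N S. ?r + real (card {e\<in>N - Y. f e \<in> P}))"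
        unfolding P_def using per_f[OF M Y _ Ss(1)] by (intro sum_mono) blast
      also have "\<dots> = real (card (Bs N S)) * ?r + (\<Sum>f\<in>Bs N S. real (card {e\<in>N - Y. f e \<in> P}))"
        by (simp add: sum.distrib)
      also have "(\<Sum>f\<in>Bs N S. real (card {e\<in>N - Y. f e \<in> P})) = ?z * real (card (S \<inter> P)) * real (card (Bs N S)) / real k"
        using avg_f[OF finN fS ck, of "N - Y" P] k0 unfolding k_def by (simp add: field_simps)
      finally have "(\<Sum>f\<in>Bs N S. real (mrank indep {e\<in>N. \<theta> < w (f e)})) \<le>
          real (card (Bs N S)) * (?r + ?z * real (card (S \<inter> P)) / real k)"
        by (simp add: algebra_simps)
      then show ?thesis using Bpos by (simp add: divide_le_eq mult.commute)
    qed
    have "(\<Sum>S\<in>Cs n k. (\<Sum>f\<in>Bs N S. real (mrank indep {e\<in>N. \<theta> < w (f e)})) / real (card (Bs N S)))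
        \<le> (\<Sum>S\<in>Cs n k. ?r + ?z * real (card (S \<inter> P)) / real k)"
      using perS by (rule sum_mono)
    also have "\<dots> = real (card (Cs n k)) * ?r + ?z / real k * (\<Sum>S\<in>Cs n k. real (card (S \<inter> P)))"
      by (simp add: sum.distrib sum_distrib_left sum_divide_distrib)
    also have "(\<Sum>S\<in>Cs n k. real (card (S \<inter> P))) = real (card P) * real k * real (card (Cs n k)) / real n"
      using avg_S[OF PS, of k] n0 by (simp add: field_simps)
    finally have "(\<Sum>S\<in>Cs n k. (\<Sum>f\<in>Bs N S. real (mrank indep {e\<in>N. \<theta> < w (f e)})) / real (card (Bs N S)))
        \<le> real (card (Cs n k)) * (?r + ?z * (real (card P) / real n))"
      using k0 by (simp add: field_simps)
    then show ?thesis using Cpos unfolding P_def k_def by (simp add: divide_le_eq mult.commute)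
  qed
qed



theorem lemma3p2:
  fixes N :: "'a set" and indep :: "'a set \<Rightarrow> bool" and w :: "nat \<Rightarrow> real" and n :: nat
  assumes "matroid N indep" and "loopless N indep"
    and "card N \<le> n"
    and "\<And>i. i \<in> {1..n} \<Longrightarrow> w i \<ge> 0"
  shows "expected_opt N indep w n
           \<le> 3 * exp 1 / (exp 1 - 1) * F_funct w n (rank_density N indep)"
proof -
  note M = assms(1) and L = assms(2) and kn = assms(3)
  define k where "k = card N"
  define R where "R = mrank indep N"
  define B where "B = Max (insert 0 (w ` {1..n}))"
  have wB: "0 \<le> w i \<and> w i \<le> B" if "i \<in> {1..n}" for i
    using assms(4)[OF that] that unfolding B_def by (intro conjI Max_ge) auto
  have finN: "finite N" using matroid_fin[OF M] .
  define rho where "rho i = rank_density N indep (real i)" for i :: nat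
  define m where "m i = nat \<lfloor>rho i\<rfloor>" for i
  have rb: "1 \<le> rho i \<and> rho i \<le> real k" if "i \<in> {1..R}" for i
    using rho_bounds(1,2)[OF M L, of "real i"] that unfolding rho_def R_def k_def by auto
  have m1: "1 \<le> m i" if "i \<in> {1..R}" for i
    using rb[OF that] unfolding m_def by (simp add: le_nat_iff le_floor_iff)
  have mn: "m i \<le> n" if "i \<in> {1..R}" for i
  proof -
    have "of_int \<lfloor>rho i\<rfloor> \<le> rho i" by (rule of_int_floor_le)
    then have "real (m i) \<le> real k" using rb[OF that] m1[OF that] unfolding m_def by linarith
    then show ?thesis using kn unfolding k_def by linarith
  qed
  define hf where "hf i \<theta> = (\<Sum>R'\<in>Cs n (m i). hcut (Max (w ` R')) \<theta>) / real (n choose m i)" for i \<theta>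
  have hfint: "(hf i has_integral eta w n (rho i)) {0..B}" if "i \<in> {1..R}" for i
    unfolding hf_def
  proof (rule eta_integral[where a="rho i" and m="m i" and B=B and w=w and n=n])
    show "\<And>j. j \<in> {1..n} \<Longrightarrow> 0 \<le> w j \<and> w j \<le> B" by (rule wB)
    show "1 \<le> rho i" using rb[OF that] by simp
    show "m i = nat \<lfloor>rho i\<rfloor>" by (simp add: m_def)
  qed
  have hf0: "0 \<le> hf i \<theta>" for i \<theta> unfolding hf_def hcut_def by (intro divide_nonneg_nonneg sum_nonneg) auto
  define Psi where "Psi \<theta> = 4 * (\<Sum>i\<in>{1..R}. hf i \<theta>)" for \<theta>
  have PsiInt: "(Psi has_integral 4 * (\<Sum>i\<in>{1..R}. eta w n (rho i))) {0..B}"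
    unfolding Psi_def by (intro has_integral_mult_right has_integral_sum) (auto intro: hfint)
  have Fsum: "F_funct w n (rank_density N indep) = (\<Sum>i\<in>{1..R}. eta w n (rho i))"
    unfolding R_def rho_def by (rule F_sum[OF M L])
  have F0: "0 \<le> F_funct w n (rank_density N indep)"
    unfolding Fsum by (intro sum_nonneg) (use hfint hf0 in \<open>auto intro: has_integral_nonneg\<close>)
  define g where "g f \<theta> = real (mrank indep {e\<in>N. \<theta> < w (f e)})" for f :: "'a \<Rightarrow> nat" and \<theta>
  have gint: "g f integrable_on {0..B}" for f
    unfolding g_def by (rule antimono_integrable) (rule thr_antimono[OF M])
  define Phi where "Phi \<theta> = (\<Sum>S\<in>Cs n k. (\<Sum>f\<in>Bs N S. g f \<theta>) / real (card (Bs N S))) / real (card (Cs n k))" for \<theta>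
  define E1 where "E1 = (\<Sum>S\<in>Cs n k. (\<Sum>f\<in>Bs N S. integral {0..B} (g f)) / real (card (Bs N S))) / real (card (Cs n k))"
  have PhiInt: "(Phi has_integral E1) {0..B}"
    unfolding Phi_def E1_def
    by (intro has_integral_divide has_integral_sum Cs_fin Bs_fin finN integrable_integral gint)
       (auto simp: Cs_def intro: finite_subset)
  have EO: "expected_opt N indep w n = (\<Sum>S\<in>Cs n k. (\<Sum>f\<in>Bs N S. opt_weight N indep (\<lambda>e. w (f e))) / real (card (Bs N S))) / real (card (Cs n k))"
    unfolding expected_opt_def Cs_def Bs_def k_def Cs_card[symmetric] ..
  have "expected_opt N indep w n \<le> E1"
    unfolding EO E1_def
  proof (intro divide_right_mono sum_mono)
    fix S f assume S: "S \<in> Cs n k" and f: "f \<in> Bs N S"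
    have "0 \<le> w (f e) \<and> w (f e) \<le> B" if "e \<in> N" for e
      using wB Bs_val[OF f that] S unfolding Cs_def by blast
    then show "opt_weight N indep (\<lambda>e. w (f e)) \<le> integral {0..B} (g f)"
      unfolding g_def by (rule opt_bound[OF M])
  qed auto
  moreover have "E1 \<le> 4 * (\<Sum>i\<in>{1..R}. eta w n (rho i))"
  proof (rule has_integral_le[OF PhiInt PsiInt])
    fix \<theta> :: real
    define P where "P = {i\<in>{1..n}. \<theta> < w i}"
    define p where "p = real (card P) / real n"
    have qn: "card P \<le> n" unfolding P_def by (metis (no_types, lifting) card_atLeastAtMost card_mono diff_Suc_1 finite_atLeastAtMost mem_Collect_eq subsetI)
    have p0: "0 \<le> p" and p1: "p \<le> 1" unfolding p_def using qn by (auto simp: divide_le_eq)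
    obtain Y where Y: "Y \<subseteq> N" and Yb: "real (mrank indep Y) + real (card (N - Y)) * p
       \<le> 2 * (\<Sum>i\<in>{1..mrank indep N}. min 1 (real (nat \<lfloor>rank_density N indep (real i)\<rfloor>) * p))"
      using pointwise_layer[OF M L p0 p1] by blast
    have "Phi \<theta> \<le> real (mrank indep Y) + real (card (N - Y)) * p"
      unfolding Phi_def g_def p_def P_def k_def by (rule avg_bound[OF M kn Y])
    also have "\<dots> \<le> 2 * (\<Sum>i\<in>{1..R}. min 1 (real (m i) * p))"
      using Yb unfolding R_def m_def rho_def .
    also have "\<dots> \<le> 2 * (\<Sum>i\<in>{1..R}. 2 * hf i \<theta>)"
    proof -
      have "min 1 (real (m i) * p) \<le> 2 * hf i \<theta>" if i: "i \<in> {1..R}" for i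
      proof -
        have n0: "0 < n" using m1[OF i] mn[OF i] by linarith
        have Cp: "0 < real (n choose m i)" using mn[OF i] by simp
        have "hf i \<theta> = (real (n choose m i) - real ((n - card P) choose m i)) / real (n choose m i)"
          unfolding hf_def P_def using hit_value[OF m1[OF i]] by simp
        also have "\<dots> = 1 - real ((n - card P) choose m i) / real (n choose m i)"
          using Cp by (simp add: diff_divide_distrib)
        finally have "hf i \<theta> = 1 - real ((n - card P) choose m i) / real (n choose m i)" .
        moreover have "min 1 (real (m i) * (real (card P) / real n)) / 2 \<le> 1 - real ((n - card P) choose m i) / real (n choose m i)"
          by (rule hit_bound[OF mn[OF i] qn n0])
        ultimately have "min 1 (real (m i) * p) / 2 \<le> hf i \<theta>" unfolding p_def by simp
        moreover have "\<And>x y. x / 2 \<le> (y::real) \<Longrightarrow> x \<le> 2 * y" by linarith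
        ultimately show ?thesis by blast
      qed
      then show ?thesis by (intro mult_left_mono sum_mono) auto
    qed
    also have "\<dots> = Psi \<theta>" unfolding Psi_def by (simp add: sum_distrib_left)
    finally show "Phi \<theta> \<le> Psi \<theta>" .
  qed
  ultimately have E4: "expected_opt N indep w n \<le> 4 * F_funct w n (rank_density N indep)"
    unfolding Fsum by linarith
  have e1: "1 < exp (1::real)" by simp
  have e3: "exp (1::real) \<le> 3" by (rule exp_le)
  have "(4::real) \<le> 3 * exp 1 / (exp 1 - 1)"
  proof -
    have d: "0 < exp (1::real) - 1" using e1 by simp
    have "4 * (exp (1::real) - 1) \<le> 3 * exp 1" using e3 by simp
    then show ?thesis using d by (simp add: le_divide_eq)
  qed
  then have "4 * F_funct w n (rank_density N indep) \<le> 3 * exp 1 / (exp 1 - 1) * F_funct w n (rank_density N indep)"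
    using F0 by (rule mult_right_mono)
  then show ?thesis using E4 by linarith
qed

end
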